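(* Let $p$ be an odd prime, $\alpha>1$ an integer with $\gcd(p,\alpha)=1$, $\gamma=\operatorname{ord}_p(\alpha)$, and let $n\ge1$, $s\geq 0$, $t\geq 1$ be integers. Then $$S_p^n(s\gamma p^t)\leq 2 s\gamma\, t^{n-1}\left(\frac{p+1}{2}\right)^t .$$
   Context: A base-$p$ digit $d\in\{0,\dots,p-1\}$ is called small if $d<p/2$ and large otherwise. For integers $a,n\ge1$, $S_p^n(a)=\#\{0\le s<a : \text{the base-}p\text{ representation of }\alpha^s\text{ contains fewer than } n \text{ large digits}\}$ (this depends on the fixed $\alpha$). *)

theory Defs
  imports Complex_Main "HOL-Number_Theory.Number_Theory"
begin

definition digit :: "nat \<Rightarrow> nat \<Rightarrow> nat \<Rightarrow> nat" where
  "digit p m i = (m div p ^ i) mod p"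

definition large_digit :: "nat \<Rightarrow> nat \<Rightarrow> bool" where
  "large_digit p d \<longleftrightarrow> real d \<ge> real p / 2"

text \<open>Number of large digits in the base-p representation of m
  (positions i with p^i \<le> m are exactly the positions of the representation).\<close>
definition num_large_digits :: "nat \<Rightarrow> nat \<Rightarrow> nat" where
  "num_large_digits p m = card {i. p ^ i \<le> m \<and> large_digit p (digit p m i)}"

definition S :: "nat \<Rightarrow> nat \<Rightarrow> nat \<Rightarrow> nat \<Rightarrow> nat" where
  "S p \<alpha> n a = card {s. s < a \<and> num_large_digits p (\<alpha> ^ s) < n}"

end

theory Submission
  imports Defs
begin


lemma lte_coprime:
  fixes p u :: int and d k :: nat
  assumes pr: "prime p" and dk: "p^k dvd u - 1" and nd: "\<not> p^(Suc k) dvd u - 1"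
    and k: "k \<ge> 1" and pd: "\<not> p dvd int d"
  shows "p^k dvd u^d - 1 \<and> \<not> p^(Suc k) dvd u^d - 1"
proof -
  define S where "S = (\<Sum>i<d. u^i)"
  have eq: "u^d - 1 = (u - 1) * S" unfolding S_def by (rule power_diff_1_eq)
  have "p dvd u - 1" using dk k by (metis One_nat_def dvd_trans le_imp_power_dvd power_one_right)
  hence u1: "[u = 1] (mod p)" by (simp add: cong_iff_dvd_diff)
  have "[S = (\<Sum>i<d. 1)] (mod p)" unfolding S_def
    by (rule cong_sum) (metis u1 cong_pow power_one)
  hence "[S = int d] (mod p)" by simp
  hence nS: "\<not> p dvd S" using pd by (meson cong_dvd_iff)
  obtain c where c: "u - 1 = p^k * c" using dk by blast
  have nc: "\<not> p dvd c" using nd c by (metis mult_dvd_mono power_Suc2 dvd_refl)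
  have "\<not> p^(Suc k) dvd (u-1) * S"
  proof
    assume "p^(Suc k) dvd (u-1) * S"
    hence "p^k * p dvd p^k * (c * S)" by (simp add: c mult.assoc power_Suc2)
    hence "p dvd c * S" using pr by (metis dvd_mult_cancel_left not_prime_0 power_not_zero)
    thus False using nc nS pr by (simp add: prime_dvd_mult_iff)
  qed
  thus ?thesis using eq dk by simp
qed

lemma cong_pow_lin:
  fixes u :: int
  shows "[u^i = 1 + int i * (u - 1)] (mod (u-1)^2)"
proof (induction i)
  case 0 then show ?case by simp
next
  case (Suc i)
  have "[u^Suc i = (1 + int i * (u - 1)) * u] (mod (u-1)^2)"
    using Suc by (simp add: cong_mult mult.commute)
  moreover have "(1 + int i * (u - 1)) * u = 1 + int (Suc i) * (u-1) + int i * (u-1)^2"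
    by (simp add: algebra_simps power2_eq_square)
  moreover have "[1 + int (Suc i) * (u-1) + int i * (u-1)^2 = 1 + int (Suc i) * (u-1)] (mod (u-1)^2)"
    by (simp add: cong_iff_dvd_diff)
  ultimately show ?case by (metis cong_trans)
qed

lemma gauss2: "2 * (\<Sum>i<n. i) + n = n * (n::nat)"
  by (induction n) (auto simp: algebra_simps)

lemma lte_p:
  fixes p u :: int and k :: nat
  assumes pr: "prime p" and odd: "odd p" and dk: "p^k dvd u - 1" and nd: "\<not> p^(Suc k) dvd u - 1"
    and k: "k \<ge> 1"
  shows "p^(Suc k) dvd u^(nat p) - 1 \<and> \<not> p^(Suc (Suc k)) dvd u^(nat p) - 1"
proof -
  define n where "n = nat p"
  have pn: "p = int n" using pr n_def by (simp add: prime_ge_0_int)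
  define S where "S = (\<Sum>i<n. u^i)"
  have eq: "u^n - 1 = (u - 1) * S" unfolding S_def by (rule power_diff_1_eq)
  have pw: "p dvd u - 1" using dk k by (metis One_nat_def dvd_trans le_imp_power_dvd power_one_right)
  have "[S = (\<Sum>i<n. 1 + int i * (u - 1))] (mod (u-1)^2)" unfolding S_def
    by (rule cong_sum) (rule cong_pow_lin)
  moreover have "p^2 dvd (u-1)^2" using pw by simp
  ultimately have c1: "[S = (\<Sum>i<n. 1 + int i * (u - 1))] (mod p^2)" by (metis cong_dvd_modulus)
  have "(\<Sum>i<n. 1 + int i * (u - 1)) = int n + int (\<Sum>i<n. i) * (u-1)"
    by (simp add: sum.distrib sum_distrib_right)
  moreover have "p dvd int (\<Sum>i<n. i)"
  proof -
    have "int (2 * (\<Sum>i<n. i)) = int n * int n - int n" using gauss2[of n]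
      by (metis add_diff_cancel_right' of_nat_add of_nat_mult)
    hence "p dvd int (2 * (\<Sum>i<n. i))" unfolding pn by simp
    hence "p dvd 2 * int (\<Sum>i<n. i)" by simp
    moreover have "\<not> p dvd 2"
    proof
      assume "p dvd 2"
      hence "p \<le> 2" by (simp add: zdvd_imp_le)
      moreover have "p \<ge> 2" using pr by (simp add: prime_ge_2_int)
      ultimately show False using odd by (metis antisym even_numeral)
    qed
    ultimately show ?thesis using pr by (simp add: prime_dvd_mult_iff)
  qed
  ultimately have "p^2 dvd (\<Sum>i<n. 1 + int i * (u - 1)) - p" using pw pn
    by (simp add: power2_eq_square mult_dvd_mono)
  hence "[S = p] (mod p^2)" using c1
    by (metis cong_iff_dvd_diff cong_trans)
  hence d2: "p^2 dvd S - p" by (simp add: cong_iff_dvd_diff)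
  have p2: "p \<ge> 2" using pr by (simp add: prime_ge_2_int)
  have pS: "p dvd S"
  proof -
    have "p dvd S - p" using d2 by (metis dvd_trans dvd_triv_left power2_eq_square)
    thus ?thesis by (metis dvd_add dvd_refl diff_add_cancel)
  qed
  have nS: "\<not> p^2 dvd S"
  proof
    assume "p^2 dvd S"
    from dvd_diff[OF this d2] have "p^2 dvd S - (S - p)" .
    hence "p^2 dvd p" by simp
    hence "p * p \<le> p" using p2 by (simp add: power2_eq_square zdvd_imp_le)
    moreover have "2 * p \<le> p * p" using p2 by (intro mult_right_mono) auto
    ultimately show False using p2 by linarith
  qed
  obtain c where c: "u - 1 = p^k * c" using dk by blast
  have nc: "\<not> p dvd c" using nd c by (metis mult_dvd_mono power_Suc2 dvd_refl)
  obtain s where s: "S = p * s" using pS by blast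
  have ns: "\<not> p dvd s" using nS s by (simp add: power2_eq_square)
  have e2: "u^n - 1 = p^(Suc k) * (c * s)" using eq c s by (simp add: algebra_simps power_Suc2)
  have "\<not> p^(Suc (Suc k)) dvd u^n - 1"
  proof
    assume "p^(Suc (Suc k)) dvd u^n - 1"
    hence "p^(Suc k) * p dvd p^(Suc k) * (c * s)" using e2 by (simp add: power_Suc2)
    hence "p dvd c * s" using pr by (metis dvd_mult_cancel_left not_prime_0 power_not_zero)
    thus False using nc ns pr by (simp add: prime_dvd_mult_iff)
  qed
  thus ?thesis using e2 n_def by simp
qed


lemma lte_iter:
  fixes p u :: int and e :: nat
  assumes pr: "prime p" and odd: "odd p" and dk: "p^e dvd u - 1" and nd: "\<not> p^(Suc e) dvd u - 1"
    and e: "e \<ge> 1"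
  shows "p^(e+j) dvd u^(nat p ^ j) - 1 \<and> \<not> p^(Suc (e+j)) dvd u^(nat p ^ j) - 1"
proof (induction j)
  case 0 then show ?case using dk nd by simp
next
  case (Suc j)
  have "u ^ (nat p ^ Suc j) = (u^(nat p ^ j))^(nat p)" by (metis power_Suc2 power_mult)
  then show ?case using lte_p[OF pr odd _ _, of "e+j" "u^(nat p ^ j)"] Suc e by simp
qed

lemma ord_lift:
  fixes p :: nat and u :: int and e t d :: nat
  assumes pr: "prime p" and odd: "odd p" and dk: "int p^e dvd u - 1" and nd: "\<not> int p^(Suc e) dvd u - 1"
    and e: "e \<ge> 1" and d0: "0 < d" and dt: "d < p^t"
  shows "\<not> int p^(e+t) dvd u^d - 1"
proof
  assume H: "int p^(e+t) dvd u^d - 1"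
  have np: "\<not> is_unit p" using pr by auto
  obtain d' where d': "d = p ^ multiplicity p d * d'" "\<not> p dvd d'"
    using multiplicity_decompose'[OF _ np, of d] d0 by auto
  define j where "j = multiplicity p d"
  have "p^j \<le> d" using d' d0 unfolding j_def by (metis dvd_imp_le dvd_triv_left)
  hence "p^j < p^t" using dt by simp
  hence jt: "j < t" using pr by (meson power_less_imp_less_exp prime_gt_1_nat)
  have pi: "prime (int p)" using pr by simp
  have oi: "odd (int p)" using odd by simp
  have L: "int p^(e+j) dvd u^(p ^ j) - 1 \<and> \<not> int p^(Suc (e+j)) dvd u^(p ^ j) - 1"
    using lte_iter[OF pi oi dk nd e, of j] by simp
  have "\<not> int p dvd int d'" using d'(2) by simp
  from lte_coprime[OF pi _ _ _ this, of "e+j" "u^(p^j)"] L e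
  have "\<not> int p^(Suc (e+j)) dvd (u^(p^j))^d' - 1" by simp
  moreover have "(u^(p^j))^d' = u^d" unfolding j_def using d'(1) by (metis power_mult)
  moreover have "int p^(Suc (e+j)) dvd int p^(e+t)" using jt by (intro le_imp_power_dvd) simp
  ultimately show False using H dvd_trans by metis
qed

fun Lr :: "nat \<Rightarrow> nat \<Rightarrow> nat \<Rightarrow> nat" where
  "Lr p 0 x = 0"
| "Lr p (Suc t) x = (if large_digit p (x mod p) then 1 else 0) + Lr p t (x div p)"

lemma digit_Suc: "digit p x (Suc i) = digit p (x div p) i"
  by (simp add: digit_def div_mult2_eq)

lemma Lr_card: "Lr p t x = card {i. i < t \<and> large_digit p (digit p x i)}"
proof (induction t arbitrary: x)
  case 0 then show ?case by simp
next
  case (Suc t)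
  let ?P = "\<lambda>i. large_digit p (digit p x i)"
  have eq: "{i. i < Suc t \<and> ?P i} = (if ?P 0 then {0} else {}) \<union> Suc ` {i. i < t \<and> ?P (Suc i)}"
    by (auto simp: less_Suc_eq_0_disj)
  have c: "card (Suc ` {i. i < t \<and> ?P (Suc i)}) = card {i. i < t \<and> ?P (Suc i)}"
    by (simp add: card_image)
  have "card {i. i < Suc t \<and> ?P i} = (if ?P 0 then 1 else 0) + card {i. i < t \<and> ?P (Suc i)}"
    unfolding eq by (auto simp: c card_insert_if)
  moreover have "digit p x 0 = x mod p" by (simp add: digit_def)
  ultimately show ?case using Suc[of "x div p"] by (simp add: digit_Suc)
qed

lemma digit_shift:
  assumes "i < t" "p > 0"
  shows "digit p ((m div p^e) mod p^t) i = digit p m (e+i)"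
proof -
  define X where "X = m div p^e"
  have pt: "p^t = p^i * p^(t-i)" using assms by (simp flip: power_add)
  have "(X mod p^t) div p^i = X div p^i mod p^(t-i)"
    unfolding pt mod_mult2_eq using assms by simp
  moreover have "p dvd p^(t-i)" using assms by simp
  ultimately have "(X mod p^t) div p^i mod p = X div p^i mod p" by (simp add: mod_mod_cancel)
  moreover have "X div p^i = m div p^(e+i)" unfolding X_def by (simp add: div_mult2_eq power_add)
  ultimately show ?thesis unfolding digit_def X_def by simp
qed

lemma large_pos: "p > 0 \<Longrightarrow> large_digit p d \<Longrightarrow> d > 0"
  unfolding large_digit_def by (cases "d = 0") auto

lemma nld_ge:
  assumes p2: "p \<ge> 2"
  shows "Lr p t ((m div p^e) mod p^t) \<le> num_large_digits p m"
proof -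
  let ?B = "{i. p ^ i \<le> m \<and> large_digit p (digit p m i)}"
  have fin: "finite ?B"
  proof (rule finite_subset)
    show "?B \<subseteq> {..m}"
    proof
      fix i assume "i \<in> ?B"
      hence "p^i \<le> m" by simp
      moreover have "i < 2^i" by (rule less_exp)
      moreover have "2^i \<le> p^i" using p2 by (simp add: power_mono)
      ultimately have "i \<le> m" by linarith
      thus "i \<in> {..m}" by simp
    qed
  qed simp
  have "Lr p t ((m div p^e) mod p^t) = card {i. i < t \<and> large_digit p (digit p m (e+i))}"
    unfolding Lr_card using digit_shift[of _ t p m e] p2
    by (metis (lifting) less_le_trans pos2)
  also have "\<dots> = card ((+) e ` {i. i < t \<and> large_digit p (digit p m (e+i))})"
    by (simp add: card_image)
  also have "\<dots> \<le> card ?B"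
  proof (rule card_mono[OF fin])
    show "(+) e ` {i. i < t \<and> large_digit p (digit p m (e+i))} \<subseteq> ?B"
    proof
      fix k assume "k \<in> (+) e ` {i. i < t \<and> large_digit p (digit p m (e+i))}"
      then obtain i where k: "k = e + i" and L: "large_digit p (digit p m k)" by auto
      hence "digit p m k > 0" using large_pos[of p] p2 by simp
      hence "m div p^k > 0" unfolding digit_def by (metis gr0I mod_0)
      hence "p^k \<le> m" using p2 by (simp add: div_greater_zero_iff)
      thus "k \<in> ?B" using L by simp
    qed
  qed
  finally show ?thesis unfolding num_large_digits_def .
qed



lemma large_iff:
  assumes "odd p"
  shows "large_digit p d \<longleftrightarrow> d \<ge> (p+1) div 2"
proof -
  have "large_digit p d \<longleftrightarrow> 2 * d \<ge> p" unfolding large_digit_def by linarith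
  also have "\<dots> \<longleftrightarrow> d \<ge> (p+1) div 2" using assms by (auto elim!: oddE)
  finally show ?thesis .
qed

definition Aset :: "nat \<Rightarrow> nat \<Rightarrow> nat \<Rightarrow> nat set" where
  "Aset p t n = {x. x < p^t \<and> Lr p t x < n}"

lemma Aset_fin: "finite (Aset p t n)"
  unfolding Aset_def by simp

lemma A_rec:
  assumes p2: "p \<ge> 2" and odd: "odd p" and n: "n \<ge> 1"
  shows "card (Aset p (Suc t) n) \<le> ((p+1) div 2) * card (Aset p t n) + ((p+1) div 2) * card (Aset p t (n-1))"
proof -
  define h where "h = (p+1) div 2"
  define Sm where "Sm = {d. d < p \<and> \<not> large_digit p d}"
  define Lg where "Lg = {d. d < p \<and> large_digit p d}"
  have hp: "h \<le> p" unfolding h_def by presburger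
  have hh: "p - h \<le> h" unfolding h_def by presburger
  have LI: "\<And>d. large_digit p d \<longleftrightarrow> h \<le> d" using large_iff[OF odd] h_def by simp
  have Sm_eq: "Sm = {..<h}" unfolding Sm_def using hp by (auto simp: LI)
  have Lg_eq: "Lg = {h..<p}" unfolding Lg_def by (auto simp: LI)
  have cSm: "card Sm = h" using Sm_eq by simp
  have cLg: "card Lg \<le> h" using Lg_eq hh by simp
  let ?f = "\<lambda>(d, y). d + p * y"
  have sub: "Aset p (Suc t) n \<subseteq> ?f ` (Sm \<times> Aset p t n \<union> Lg \<times> Aset p t (n-1))"
  proof
    fix x assume x: "x \<in> Aset p (Suc t) n"
    have xe: "x = x mod p + p * (x div p)" by simp
    have xl: "x div p < p^t" using x p2 unfolding Aset_def
      by (simp add: less_mult_imp_div_less mult.commute)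
    have xm: "x mod p < p" using p2 by simp
    have L: "(if large_digit p (x mod p) then 1 else 0) + Lr p t (x div p) < n"
      using x unfolding Aset_def by simp
    show "x \<in> ?f ` (Sm \<times> Aset p t n \<union> Lg \<times> Aset p t (n-1))"
    proof (cases "large_digit p (x mod p)")
      case True
      hence "(x mod p, x div p) \<in> Lg \<times> Aset p t (n-1)"
        using L xl xm unfolding Lg_def Aset_def by auto
      thus ?thesis using xe by force
    next
      case False
      hence "(x mod p, x div p) \<in> Sm \<times> Aset p t n"
        using L xl xm unfolding Sm_def Aset_def by auto
      thus ?thesis using xe by force
    qed
  qed
  have finS: "finite Sm" "finite Lg" using Sm_eq Lg_eq by auto
  have "card (Aset p (Suc t) n) \<le> card (?f ` (Sm \<times> Aset p t n \<union> Lg \<times> Aset p t (n-1)))"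
    by (rule card_mono[OF _ sub]) (simp add: finS Aset_fin)
  also have "\<dots> \<le> card (Sm \<times> Aset p t n \<union> Lg \<times> Aset p t (n-1))" by (rule card_image_le) (simp add: finS Aset_fin)
  also have "\<dots> \<le> card (Sm \<times> Aset p t n) + card (Lg \<times> Aset p t (n-1))" by (rule card_Un_le)
  also have "\<dots> = h * card (Aset p t n) + card Lg * card (Aset p t (n-1))"
    by (simp add: card_cartesian_product cSm)
  also have "\<dots> \<le> h * card (Aset p t n) + h * card (Aset p t (n-1))"
    using cLg by simp
  finally show ?thesis unfolding h_def .
qed

lemma binsum_rec: "(\<Sum>k<Suc m. Suc t choose k) = (\<Sum>k<Suc m. t choose k) + (\<Sum>k<m. t choose k)"
  by (induction m) simp_all

lemma binsum0': "(\<Sum>k<m. 0 choose k) = (if m = 0 then 0 else 1)"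
  by (induction m) (auto simp: binomial_eq_0)

lemma binsum0: "(\<Sum>k<m. 0 choose k) \<le> 1"
  by (simp add: binsum0')

lemma A_bound:
  assumes p2: "p \<ge> 2" and odd: "odd p"
  shows "card (Aset p t n) \<le> ((p+1) div 2)^t * (\<Sum>k<n. t choose k)"
proof (induction t arbitrary: n)
  case 0
  show ?case
  proof (cases n)
    case 0 then show ?thesis unfolding Aset_def by simp
  next
    case (Suc m)
    have "Aset p 0 n \<subseteq> {0}" unfolding Aset_def by auto
    hence "card (Aset p 0 n) \<le> card {0::nat}" by (intro card_mono) auto
    hence "card (Aset p 0 n) \<le> 1" by simp
    moreover have "(\<Sum>k<n. 0 choose k) \<ge> 1" using Suc by (simp only: binsum0') simp
    ultimately show ?thesis by simp
  qed
next
  case (Suc t)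
  define h where "h = (p+1) div 2"
  show ?case
  proof (cases n)
    case 0 then show ?thesis unfolding Aset_def by simp
  next
    case (Suc m)
    have "card (Aset p (Suc t) n) \<le> h * card (Aset p t n) + h * card (Aset p t m)"
      using A_rec[OF p2 odd, of n t] Suc unfolding h_def by simp
    also have "\<dots> \<le> h * (h^t * (\<Sum>k<n. t choose k)) + h * (h^t * (\<Sum>k<m. t choose k))"
      using Suc.IH[of n] Suc.IH[of m] unfolding h_def by (intro add_mono mult_le_mono2)
    also have "\<dots> = h^(Suc t) * ((\<Sum>k<n. t choose k) + (\<Sum>k<m. t choose k))"
      by (simp add: algebra_simps)
    also have "\<dots> = h^(Suc t) * (\<Sum>k<n. Suc t choose k)"
      using Suc by (simp only: binsum_rec)
    finally show ?thesis unfolding h_def .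
  qed
qed

lemma geo_bound: "t \<ge> 2 \<Longrightarrow> (\<Sum>k<Suc m. t^k) \<le> 2 * (t::nat)^m"
proof (induction m)
  case 0 then show ?case by simp
next
  case (Suc m)
  have "2 * t^m \<le> t^Suc m" using Suc.prems by simp
  moreover have "(\<Sum>k<Suc (Suc m). t^k) = (\<Sum>k<Suc m. t^k) + t^Suc m" by (rule sum.lessThan_Suc)
  ultimately show ?case using Suc by linarith
qed

lemma binsum_bound:
  assumes "t \<ge> 1" "n \<ge> 1"
  shows "(\<Sum>k<n. t choose k) \<le> 2 * t^(n-1)"
proof (cases "t = 1")
  case True
  obtain m where m: "n = Suc m" using assms by (cases n) auto
  have "(\<Sum>k<n. Suc 0 choose k) = (\<Sum>k<Suc m. 0 choose k) + (\<Sum>k<m. 0 choose k)"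
    unfolding m by (simp only: binsum_rec)
  also have "\<dots> \<le> 2" using binsum0[of "Suc m"] binsum0[of m] by simp
  finally show ?thesis using True by simp
next
  case False
  hence t2: "t \<ge> 2" using assms by simp
  obtain m where m: "n = Suc m" using assms by (cases n) auto
  have "(\<Sum>k<n. t choose k) \<le> (\<Sum>k<n. t^k)"
  proof (rule sum_mono)
    fix k show "t choose k \<le> t^k"
      by (cases "k \<le> t") (simp_all add: binomial_le_pow binomial_eq_0)
  qed
  also have "\<dots> \<le> 2 * t^(n-1)" unfolding m using geo_bound[OF t2] by simp
  finally show ?thesis .
qed



lemma main_count:
  fixes p \<alpha> n m t :: nat
  assumes pr: "prime p" and odd: "odd p" and a1: "\<alpha> > 1" and cop: "coprime p \<alpha>"
    and n1: "n \<ge> 1" and t1: "t \<ge> 1"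
  shows "S p \<alpha> n (m * ord p \<alpha> * p ^ t) \<le> ord p \<alpha> * m * (((p+1) div 2)^t * (2 * t^(n-1)))"
proof -
  define \<gamma> where "\<gamma> = ord p \<alpha>"
  have g0: "\<gamma> > 0" using cop unfolding \<gamma>_def by simp
  have p2: "p \<ge> 2" using pr by (simp add: prime_ge_2_nat)
  define u :: int where "u = int \<alpha> ^ \<gamma>"
  have cg: "[\<alpha>^\<gamma> = 1] (mod p)" unfolding \<gamma>_def by (rule ord)
  have pu: "int p dvd u - 1" using cg unfolding u_def
    by (metis cong_int_iff cong_iff_dvd_diff of_nat_1 of_nat_power cong_sym_eq)
  have "\<alpha>^\<gamma> > 1" using a1 g0 one_less_power by blast
  hence u0: "u - 1 \<noteq> 0" unfolding u_def by (metis of_nat_1 of_nat_power eq_iff_diff_eq_0 less_irrefl of_nat_eq_iff)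
  have npu: "\<not> is_unit (int p)" using p2 by simp
  define e where "e = multiplicity (int p) (u - 1)"
  have dk: "int p^e dvd u - 1" unfolding e_def by (rule multiplicity_dvd)
  have nd: "\<not> int p^(Suc e) dvd u - 1"
    using multiplicity_geI[OF u0 npu] unfolding e_def by (metis Suc_n_not_le_n)
  have e1: "e \<ge> 1" using multiplicity_geI[OF u0 npu, of 1] pu unfolding e_def by simp
  define X where "X j = (\<alpha>^j div p^e) mod p^t" for j
  have block: "q1 = q2" if q: "q1 < p^t" "q2 < p^t" and XX: "X (b + \<gamma>*q1) = X (b + \<gamma>*q2)" for b q1 q2
  proof -
    have ue: "[\<alpha>^\<gamma> = 1] (mod p^e)" using dk unfolding u_def
      by (metis cong_int_iff cong_iff_dvd_diff of_nat_1 of_nat_power cong_sym_eq)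
    have lowmod: "\<alpha>^(b+\<gamma>*q) mod p^e = \<alpha>^b mod p^e" for q
    proof -
      have "[(\<alpha>^\<gamma>)^q = 1] (mod p^e)" using cong_pow[OF ue, of q] by simp
      hence "[\<alpha>^b * (\<alpha>^\<gamma>)^q = \<alpha>^b * 1] (mod p^e)" by (rule cong_scalar_left)
      thus ?thesis by (simp add: cong_def power_add power_mult)
    qed
    have full: "\<alpha>^j mod p^(e+t) = p^e * X j + \<alpha>^j mod p^e" for j
      unfolding X_def power_add by (rule mod_mult2_eq)
    have key: "False" if lt: "q1 < q2" "q2 < p^t" "X (b + \<gamma>*q1) = X (b + \<gamma>*q2)" for q1 q2
    proof -
      define d where "d = q2 - q1"
      have "\<alpha>^(b+\<gamma>*q1) mod p^(e+t) = \<alpha>^(b+\<gamma>*q2) mod p^(e+t)"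
        using full[of "b+\<gamma>*q1"] full[of "b+\<gamma>*q2"] lowmod[of q1] lowmod[of q2] lt(3) by simp
      hence "[\<alpha>^(b+\<gamma>*q2) = \<alpha>^(b+\<gamma>*q1)] (mod p^(e+t))"
        unfolding cong_def by simp
      hence "[int (\<alpha>^(b+\<gamma>*q2)) = int (\<alpha>^(b+\<gamma>*q1))] (mod int (p^(e+t)))"
        using cong_int_iff by blast
      hence dv: "int p^(e+t) dvd int (\<alpha>^(b+\<gamma>*q2)) - int (\<alpha>^(b+\<gamma>*q1))"
        by (simp add: cong_iff_dvd_diff)
      have "\<alpha>^(b+\<gamma>*q2) = \<alpha>^(b+\<gamma>*q1) * (\<alpha>^\<gamma>)^d"
      proof -
        have "b+\<gamma>*q2 = (b+\<gamma>*q1) + \<gamma>*d" using lt unfolding d_def by (simp add: algebra_simps)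
        thus ?thesis by (simp add: power_add power_mult)
      qed
      hence "int (\<alpha>^(b+\<gamma>*q2)) - int (\<alpha>^(b+\<gamma>*q1)) = int (\<alpha>^(b+\<gamma>*q1)) * (u^d - 1)"
        unfolding u_def by (simp add: algebra_simps)
      hence "int p^(e+t) dvd int (\<alpha>^(b+\<gamma>*q1)) * (u^d - 1)" using dv by simp
      moreover have "coprime (int p^(e+t)) (int (\<alpha>^(b+\<gamma>*q1)))"
        using cop by (simp add: coprime_power_left_iff coprime_power_right_iff)
      ultimately have "int p^(e+t) dvd u^d - 1" by (metis coprime_dvd_mult_right_iff)
      moreover have "0 < d" "d < p^t" using lt unfolding d_def by auto
      ultimately show False using ord_lift[OF pr odd dk nd e1] by blast
    qed
    show ?thesis
    proof (rule ccontr)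
      assume "q1 \<noteq> q2"
      hence "q1 < q2 \<or> q2 < q1" by auto
      thus False using key q XX by metis
    qed
  qed
  define M where "M = m * \<gamma> * p^t"
  define T where "T = {j. j < M \<and> num_large_digits p (\<alpha>^j) < n}"
  define f where "f j = (j mod \<gamma>, j div (\<gamma> * p^t), X j)" for j
  have decomp: "j = (j mod \<gamma> + \<gamma> * p^t * (j div (\<gamma> * p^t))) + \<gamma> * ((j div \<gamma>) mod p^t)" for j
  proof -
    have "j = j mod (\<gamma> * p^t) + \<gamma> * p^t * (j div (\<gamma> * p^t))" by simp
    also have "j mod (\<gamma> * p^t) = \<gamma> * ((j div \<gamma>) mod p^t) + j mod \<gamma>" by (rule mod_mult2_eq)
    finally show ?thesis by simp
  qed
  have inj: "inj_on f T"
  proof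
    fix j1 j2 assume "j1 \<in> T" "j2 \<in> T" and fe: "f j1 = f j2"
    hence e1': "j1 mod \<gamma> = j2 mod \<gamma>" "j1 div (\<gamma> * p^t) = j2 div (\<gamma> * p^t)" "X j1 = X j2"
      unfolding f_def by auto
    define b where "b = j1 mod \<gamma> + \<gamma> * p^t * (j1 div (\<gamma> * p^t))"
    have j1: "j1 = b + \<gamma> * ((j1 div \<gamma>) mod p^t)" unfolding b_def by (rule decomp)
    have j2: "j2 = b + \<gamma> * ((j2 div \<gamma>) mod p^t)" unfolding b_def e1' by (rule decomp)
    have "(j1 div \<gamma>) mod p^t = (j2 div \<gamma>) mod p^t"
      apply (rule block[of _ _ b])
      using p2 e1'(3) j1 j2 by auto
    thus "j1 = j2" using j1 j2 by simp
  qed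
  have img: "f ` T \<subseteq> {..<\<gamma>} \<times> {..<m} \<times> Aset p t n"
  proof
    fix y assume "y \<in> f ` T"
    then obtain j where j: "j \<in> T" "y = f j" by auto
    have "j mod \<gamma> < \<gamma>" using g0 by simp
    moreover have "j div (\<gamma> * p^t) < m"
    proof -
      have "j < m * (\<gamma> * p^t)" using j(1) unfolding T_def M_def by (simp add: mult.assoc)
      thus ?thesis by (rule less_mult_imp_div_less)
    qed
    moreover have "X j < p^t" unfolding X_def using p2 by simp
    moreover have "Lr p t (X j) < n" using nld_ge[OF p2, of t "\<alpha>^j" e] j(1) unfolding X_def T_def by simp
    ultimately show "y \<in> {..<\<gamma>} \<times> {..<m} \<times> Aset p t n" using j(2) unfolding f_def Aset_def by simp
  qed
  have "card T \<le> card ({..<\<gamma>} \<times> {..<m} \<times> Aset p t n)"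
    by (rule card_inj_on_le[OF inj img]) (simp add: Aset_fin)
  also have "\<dots> = \<gamma> * m * card (Aset p t n)" by (simp add: card_cartesian_product)
  also have "\<dots> \<le> \<gamma> * m * (((p+1) div 2)^t * (\<Sum>k<n. t choose k))"
    using A_bound[OF p2 odd] by simp
  also have "\<dots> \<le> \<gamma> * m * (((p+1) div 2)^t * (2 * t^(n-1)))"
    using binsum_bound[OF t1 n1] by simp
  finally show ?thesis unfolding S_def T_def M_def \<gamma>_def .
qed


theorem lemma2p8:
  fixes p \<alpha> n s t :: nat
  assumes "prime p" and "odd p" and "\<alpha> > 1" and "coprime p \<alpha>"
    and "n \<ge> 1" and "t \<ge> 1"
  shows "real (S p \<alpha> n (s * ord p \<alpha> * p ^ t))
           \<le> 2 * real s * real (ord p \<alpha>) * real t ^ (n - 1) * ((real p + 1) / 2) ^ t"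
proof -
  have h: "real ((p+1) div 2) = (real p + 1) / 2" using assms(2) by (auto elim!: oddE)
  have "real (S p \<alpha> n (s * ord p \<alpha> * p ^ t)) \<le> real (ord p \<alpha> * s * (((p+1) div 2)^t * (2 * t^(n-1))))"
    using main_count[OF assms, of s] by (rule of_nat_mono)
  also have "\<dots> = 2 * real s * real (ord p \<alpha>) * real t ^ (n - 1) * ((real p + 1) / 2) ^ t"
    unfolding of_nat_mult of_nat_power h by (simp add: mult_ac)
  finally show ?thesis .
qed

end
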